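(* Let $\Omega\subset\mathbb{R}^n$ ($n\ge2$) be a bounded domain with Lipschitz boundary, $\gamma,\beta,\theta\in M_0(\Omega)$ with $\theta(x)\ge\gamma(x)+\beta(x)+\varepsilon_0$ a.e. for some $\varepsilon_0>0$, and let $p\in M_0(\Omega)$ with $p(x)\ge\theta(x)$ for a.e. $x\in\Omega$. Then $W^{1,p(x)}(\Omega)\subset S_{1,\gamma(x),\beta(x),\theta(x)}(\Omega)$.
   Context: $M_0(\Omega)$: measurable $p:\Omega\to[1,\infty]$ with $1\le p^-\le p(x)\le p^+<\infty$ a.e. $W^{1,p(x)}(\Omega)=\{u\in L^{p(x)}(\Omega):|\nabla u|\in L^{p(x)}(\Omega)\}$ (variable exponent Sobolev space). $D_i=\partial/\partial x_i$. $S_{1,\gamma(x),\beta(x),\theta(x)}(\Omega)=\{u\in L^1(\Omega):\int_\Omega|u|^{\theta(x)}dx+\sum_{i=1}^n\int_\Omega|u|^{\gamma(x)}|D_iu|^{\beta(x)}dx<\infty\}$. *)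

theory Defs
  imports "HOL-Analysis.Analysis"
begin

text \<open>Omega has Lipschitz boundary: near every boundary point, after a rigid
  change of coordinates (encoded by a unit direction nu), Omega is the region
  below the graph of a Lipschitz function g of the coordinates orthogonal to nu
  (g is constant along nu).\<close>
definition lipschitz_boundary :: "(real^'n) set \<Rightarrow> bool" where
  "lipschitz_boundary \<Omega> \<longleftrightarrow>
     (\<forall>x0\<in>frontier \<Omega>. \<exists>r>0. \<exists>\<nu>::real^'n. \<exists>g::real^'n \<Rightarrow> real. \<exists>L.
        norm \<nu> = 1 \<and> lipschitz_on L UNIV g \<and>
        (\<forall>y t. g (y + t *\<^sub>R \<nu>) = g y) \<and>
        \<Omega> \<inter> ball x0 r = {y \<in> ball x0 r. y \<bullet> \<nu> < g y})"

definition bounded_lipschitz_domain :: "(real^'n) set \<Rightarrow> bool" where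
  "bounded_lipschitz_domain \<Omega> \<longleftrightarrow>
     open \<Omega> \<and> connected \<Omega> \<and> \<Omega> \<noteq> {} \<and> bounded \<Omega> \<and> lipschitz_boundary \<Omega>"

definition M0 :: "(real^'n) set \<Rightarrow> ((real^'n) \<Rightarrow> real) set" where
  "M0 \<Omega> = {p. p \<in> borel_measurable (lebesgue_on \<Omega>) \<and>
               (AE x in lebesgue_on \<Omega>. 1 \<le> p x) \<and>
               (\<exists>P. AE x in lebesgue_on \<Omega>. p x \<le> P)}"

definition modular :: "(real^'n) set \<Rightarrow> ((real^'n) \<Rightarrow> real) \<Rightarrow> ((real^'n) \<Rightarrow> real) \<Rightarrow> ennreal" where
  "modular \<Omega> p u = (\<integral>\<^sup>+ x. ennreal (\<bar>u x\<bar> powr p x) \<partial>(lebesgue_on \<Omega>))"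

definition Lvar :: "(real^'n) set \<Rightarrow> ((real^'n) \<Rightarrow> real) \<Rightarrow> ((real^'n) \<Rightarrow> real) set" where
  "Lvar \<Omega> p = {u. u \<in> borel_measurable (lebesgue_on \<Omega>) \<and>
                 (\<exists>c>0. modular \<Omega> p (\<lambda>x. u x / c) < \<infinity>)}"

definition pderiv_i :: "'n \<Rightarrow> ((real^'n) \<Rightarrow> real) \<Rightarrow> (real^'n) \<Rightarrow> real" where
  "pderiv_i i f = (\<lambda>x. frechet_derivative f (at x) (axis i 1))"

fun iter_pderiv :: "'n list \<Rightarrow> ((real^'n) \<Rightarrow> real) \<Rightarrow> (real^'n) \<Rightarrow> real" where
  "iter_pderiv [] f = f"
| "iter_pderiv (i # is) f = pderiv_i i (iter_pderiv is f)"

definition smooth_fun :: "((real^'n) \<Rightarrow> real) \<Rightarrow> bool" where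
  "smooth_fun f \<longleftrightarrow> (\<forall>is. (\<forall>x. iter_pderiv is f differentiable (at x)) \<and>
                             continuous_on UNIV (iter_pderiv is f))"

definition test_fun :: "(real^'n) set \<Rightarrow> ((real^'n) \<Rightarrow> real) \<Rightarrow> bool" where
  "test_fun \<Omega> \<phi> \<longleftrightarrow> smooth_fun \<phi> \<and> compact (closure {x. \<phi> x \<noteq> 0}) \<and>
                      closure {x. \<phi> x \<noteq> 0} \<subseteq> \<Omega>"

definition locally_integrable :: "(real^'n) set \<Rightarrow> ((real^'n) \<Rightarrow> real) \<Rightarrow> bool" where
  "locally_integrable \<Omega> f \<longleftrightarrow>
     (\<forall>K. compact K \<and> K \<subseteq> \<Omega> \<longrightarrow> integrable (lebesgue_on K) f)"

definition weak_pderiv :: "(real^'n) set \<Rightarrow> 'n \<Rightarrow> ((real^'n) \<Rightarrow> real) \<Rightarrow> ((real^'n) \<Rightarrow> real) \<Rightarrow> bool" where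
  "weak_pderiv \<Omega> i u v \<longleftrightarrow> locally_integrable \<Omega> u \<and> locally_integrable \<Omega> v \<and>
     (\<forall>\<phi>. test_fun \<Omega> \<phi> \<longrightarrow>
        (\<integral>x. u x * pderiv_i i \<phi> x \<partial>(lebesgue_on \<Omega>)) = - (\<integral>x. v x * \<phi> x \<partial>(lebesgue_on \<Omega>)))"

definition W1var :: "(real^'n) set \<Rightarrow> ((real^'n) \<Rightarrow> real) \<Rightarrow> ((real^'n) \<Rightarrow> real) set" where
  "W1var \<Omega> p = {u. u \<in> Lvar \<Omega> p \<and>
      (\<exists>Du::'n \<Rightarrow> (real^'n) \<Rightarrow> real. (\<forall>i. weak_pderiv \<Omega> i u (Du i)) \<and>
          (\<lambda>x. norm (\<chi> i. Du i x)) \<in> Lvar \<Omega> p)}"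

definition S_space :: "(real^'n) set \<Rightarrow> ((real^'n) \<Rightarrow> real) \<Rightarrow> ((real^'n) \<Rightarrow> real)
                        \<Rightarrow> ((real^'n) \<Rightarrow> real) \<Rightarrow> ((real^'n) \<Rightarrow> real) set" where
  "S_space \<Omega> \<gamma> \<beta> \<theta> = {u. integrable (lebesgue_on \<Omega>) u \<and>
      (\<exists>Du::'n \<Rightarrow> (real^'n) \<Rightarrow> real. (\<forall>i. weak_pderiv \<Omega> i u (Du i)) \<and>
         (\<integral>\<^sup>+ x. ennreal (\<bar>u x\<bar> powr \<theta> x) \<partial>(lebesgue_on \<Omega>))
         + (\<Sum>i\<in>UNIV. \<integral>\<^sup>+ x. ennreal (\<bar>u x\<bar> powr \<gamma> x * \<bar>Du i x\<bar> powr \<beta> x) \<partial>(lebesgue_on \<Omega>))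
         < \<infinity>)}"

end

theory Submission
  imports Defs
begin

lemma powr_le_1_plus:
  fixes a e q :: real
  assumes "0 \<le> a" "0 \<le> e" "e \<le> q"
  shows "a powr e \<le> 1 + a powr q"
proof (cases "a \<le> 1")
  case True
  then have "a powr e \<le> 1 powr e" using assms by (intro powr_mono2) auto
  then have "a powr e \<le> 1" by simp
  then show ?thesis by (smt (verit) powr_ge_zero)
next
  case False
  then have "a powr e \<le> a powr q" using assms by (intro powr_mono) auto
  then show ?thesis by simp
qed

lemma powr_prod_bound:
  fixes a b g h q :: real
  assumes "0 \<le> a" "0 \<le> b" "0 \<le> g" "0 \<le> h" "g + h \<le> q"
  shows "a powr g * b powr h \<le> 1 + a powr q + b powr q"
proof -
  define m where "m = max a b"
  have m0: "0 \<le> m" using assms m_def by simp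
  have "a powr g \<le> m powr g" using assms m_def by (intro powr_mono2) auto
  moreover have "b powr h \<le> m powr h" using assms m_def by (intro powr_mono2) auto
  ultimately have "a powr g * b powr h \<le> m powr g * m powr h"
    by (intro mult_mono) auto
  also have "\<dots> = m powr (g + h)" by (simp add: powr_add)
  also have "\<dots> \<le> 1 + m powr q" using powr_le_1_plus[of m "g+h" q] assms m0 by simp
  also have "\<dots> \<le> 1 + a powr q + b powr q"
    unfolding m_def by (cases "a \<le> b") (auto simp: max_def)
  finally show ?thesis .
qed

lemma Lvar_modular_finite:
  assumes u: "u \<in> Lvar \<Omega> p" and p: "p \<in> M0 \<Omega>"
  shows "(\<integral>\<^sup>+ x. ennreal (\<bar>u x\<bar> powr p x) \<partial>(lebesgue_on \<Omega>)) < \<infinity>"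
proof -
  have um[measurable]: "u \<in> borel_measurable (lebesgue_on \<Omega>)" using u by (simp add: Lvar_def)
  obtain c where c: "c > 0" and fin: "modular \<Omega> p (\<lambda>x. u x / c) < \<infinity>"
    using u by (auto simp: Lvar_def)
  have pm[measurable]: "p \<in> borel_measurable (lebesgue_on \<Omega>)" using p by (simp add: M0_def)
  obtain P where P: "AE x in lebesgue_on \<Omega>. p x \<le> P" and p1: "AE x in lebesgue_on \<Omega>. 1 \<le> p x"
    using p by (auto simp: M0_def)
  define K where "K = 1 + c powr P"
  have "AE x in lebesgue_on \<Omega>. ennreal (\<bar>u x\<bar> powr p x) \<le> ennreal K * ennreal (\<bar>u x / c\<bar> powr p x)"
    using P p1
  proof eventually_elim
    case (elim x)
    have cp: "c powr p x \<le> K"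
    proof (cases "c \<le> 1")
      case True
      then have "c powr p x \<le> 1 powr p x" using c elim by (intro powr_mono2) auto
      then have "c powr p x \<le> 1" by simp
      then show ?thesis unfolding K_def by (smt (verit) powr_ge_zero)
    next
      case False
      then have "c powr p x \<le> c powr P" using elim by (intro powr_mono) auto
      then show ?thesis unfolding K_def by simp
    qed
    have "\<bar>u x\<bar> = c * \<bar>u x / c\<bar>" using c by simp
    then have "\<bar>u x\<bar> powr p x = c powr p x * \<bar>u x / c\<bar> powr p x"
      using c by (metis abs_ge_zero less_imp_le powr_mult)
    also have "\<dots> \<le> K * \<bar>u x / c\<bar> powr p x"
      using cp by (intro mult_right_mono) auto
    finally show ?case
      by (metis K_def ennreal_leI ennreal_mult' powr_ge_zero add_nonneg_nonneg zero_le_one)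
  qed
  then have "(\<integral>\<^sup>+ x. ennreal (\<bar>u x\<bar> powr p x) \<partial>(lebesgue_on \<Omega>))
      \<le> (\<integral>\<^sup>+ x. ennreal K * ennreal (\<bar>u x / c\<bar> powr p x) \<partial>(lebesgue_on \<Omega>))"
    by (rule nn_integral_mono_AE)
  also have "\<dots> = ennreal K * modular \<Omega> p (\<lambda>x. u x / c)"
    unfolding modular_def by (rule nn_integral_cmult) measurable
  also have "\<dots> < \<infinity>" using fin by (simp add: ennreal_mult_less_top)
  finally show ?thesis .
qed

theorem theorem3p5:
  fixes \<Omega> :: "(real^'n) set"
    and \<gamma> \<beta> \<theta> p :: "(real^'n) \<Rightarrow> real"
    and \<epsilon>0 :: real
  assumes "CARD('n) \<ge> 2"
    and "bounded_lipschitz_domain \<Omega>"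
    and "\<gamma> \<in> M0 \<Omega>" and "\<beta> \<in> M0 \<Omega>" and "\<theta> \<in> M0 \<Omega>"
    and "\<epsilon>0 > 0"
    and "AE x in lebesgue_on \<Omega>. \<theta> x \<ge> \<gamma> x + \<beta> x + \<epsilon>0"
    and "p \<in> M0 \<Omega>"
    and "AE x in lebesgue_on \<Omega>. p x \<ge> \<theta> x"
  shows "W1var \<Omega> p \<subseteq> S_space \<Omega> \<gamma> \<beta> \<theta>"
proof
  fix u assume "u \<in> W1var \<Omega> p"
  then obtain Du :: "'n \<Rightarrow> (real^'n) \<Rightarrow> real" where uL: "u \<in> Lvar \<Omega> p"
    and wd: "\<forall>i. weak_pderiv \<Omega> i u (Du i)" and gL: "(\<lambda>x. norm (\<chi> i. Du i x)) \<in> Lvar \<Omega> p"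
    by (auto simp: W1var_def)
  define b where "b = (\<lambda>x. norm (\<chi> i. Du i x))"
  have um[measurable]: "u \<in> borel_measurable (lebesgue_on \<Omega>)" using uL by (simp add: Lvar_def)
  have bm[measurable]: "b \<in> borel_measurable (lebesgue_on \<Omega>)" using gL by (simp add: Lvar_def b_def)
  have pm[measurable]: "p \<in> borel_measurable (lebesgue_on \<Omega>)" using assms(8) by (simp add: M0_def)
  have I1: "(\<integral>\<^sup>+ x. ennreal (\<bar>u x\<bar> powr p x) \<partial>(lebesgue_on \<Omega>)) < \<infinity>"
    by (rule Lvar_modular_finite[OF uL assms(8)])
  have I2': "(\<integral>\<^sup>+ x. ennreal (\<bar>b x\<bar> powr p x) \<partial>(lebesgue_on \<Omega>)) < \<infinity>"
    unfolding b_def by (rule Lvar_modular_finite[OF gL assms(8)])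
  have I2: "(\<integral>\<^sup>+ x. ennreal (b x powr p x) \<partial>(lebesgue_on \<Omega>)) < \<infinity>"
    using I2' by (simp add: b_def)
  have Om: "\<Omega> \<in> sets lebesgue" using assms(2) by (simp add: bounded_lipschitz_domain_def borel_open)
  have I0: "emeasure (lebesgue_on \<Omega>) (space (lebesgue_on \<Omega>)) < \<infinity>"
    using assms(2) Om emeasure_bounded_finite[of \<Omega>]
    by (simp add: bounded_lipschitz_domain_def emeasure_restrict_space)
  define F where "F x = ennreal 1 + ennreal (\<bar>u x\<bar> powr p x) + ennreal (b x powr p x)" for x
  have IF: "integral\<^sup>N (lebesgue_on \<Omega>) F < \<infinity>"
  proof -
    have "integral\<^sup>N (lebesgue_on \<Omega>) F = (\<integral>\<^sup>+ x. ennreal 1 \<partial>(lebesgue_on \<Omega>))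
       + (\<integral>\<^sup>+ x. ennreal (\<bar>u x\<bar> powr p x) \<partial>(lebesgue_on \<Omega>))
       + (\<integral>\<^sup>+ x. ennreal (b x powr p x) \<partial>(lebesgue_on \<Omega>))"
      unfolding F_def by (subst nn_integral_add; (subst nn_integral_add)?; measurable?; simp?)
    then show ?thesis using I0 I1 I2 by simp
  qed
  have Fle: "ennreal (f x) \<le> F x" if "f x \<le> 1 + \<bar>u x\<bar> powr p x + b x powr p x" for f x
  proof -
    have "ennreal (f x) \<le> ennreal (1 + \<bar>u x\<bar> powr p x + b x powr p x)"
      using that by (rule ennreal_leI)
    also have "\<dots> = F x" unfolding F_def
      by (subst ennreal_plus; (subst ennreal_plus)?; simp add: add_nonneg_nonneg)
    finally show ?thesis .
  qed
  obtain P1 where AEs: "AE x in lebesgue_on \<Omega>. 1 \<le> \<gamma> x \<and> 1 \<le> \<beta> x \<and> 1 \<le> \<theta> x \<and> 1 \<le> p x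
      \<and> \<theta> x \<ge> \<gamma> x + \<beta> x + \<epsilon>0 \<and> p x \<ge> \<theta> x" and "True"
    using assms(3-9) by (auto simp: M0_def elim!: eventually_rev_mp intro!: eventually_mono)
  have int: "integrable (lebesgue_on \<Omega>) u"
  proof (rule integrableI_bounded)
    show "u \<in> borel_measurable (lebesgue_on \<Omega>)" by measurable
    have "(\<integral>\<^sup>+ x. ennreal (norm (u x)) \<partial>(lebesgue_on \<Omega>)) \<le> integral\<^sup>N (lebesgue_on \<Omega>) F"
      using AEs
    proof (intro nn_integral_mono_AE, eventually_elim)
      case (elim x)
      have "\<bar>u x\<bar> powr 1 \<le> 1 + \<bar>u x\<bar> powr p x" using elim by (intro powr_le_1_plus) auto
      then have "\<bar>u x\<bar> \<le> 1 + \<bar>u x\<bar> powr p x + b x powr p x"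
        by (cases "u x = 0") (auto intro: add_increasing2)
      then show ?case using Fle[of "\<lambda>x. norm (u x)" x] by simp
    qed
    then show "(\<integral>\<^sup>+ x. ennreal (norm (u x)) \<partial>(lebesgue_on \<Omega>)) < \<infinity>" using IF by simp
  qed
  have T1: "(\<integral>\<^sup>+ x. ennreal (\<bar>u x\<bar> powr \<theta> x) \<partial>(lebesgue_on \<Omega>)) < \<infinity>"
  proof -
    have "(\<integral>\<^sup>+ x. ennreal (\<bar>u x\<bar> powr \<theta> x) \<partial>(lebesgue_on \<Omega>)) \<le> integral\<^sup>N (lebesgue_on \<Omega>) F"
      using AEs
    proof (intro nn_integral_mono_AE, eventually_elim)
      case (elim x)
      have "\<bar>u x\<bar> powr \<theta> x \<le> 1 + \<bar>u x\<bar> powr p x" using elim by (intro powr_le_1_plus) auto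
      then show ?case by (intro Fle) (smt (verit) powr_ge_zero)
    qed
    then show ?thesis using IF by simp
  qed
  have T2: "(\<integral>\<^sup>+ x. ennreal (\<bar>u x\<bar> powr \<gamma> x * \<bar>Du i x\<bar> powr \<beta> x) \<partial>(lebesgue_on \<Omega>)) < \<infinity>" for i
  proof -
    have "(\<integral>\<^sup>+ x. ennreal (\<bar>u x\<bar> powr \<gamma> x * \<bar>Du i x\<bar> powr \<beta> x) \<partial>(lebesgue_on \<Omega>))
        \<le> integral\<^sup>N (lebesgue_on \<Omega>) F"
      using AEs
    proof (intro nn_integral_mono_AE, eventually_elim)
      case (elim x)
      have bi: "\<bar>Du i x\<bar> \<le> b x"
        unfolding b_def using component_le_norm_cart[of "\<chi> i. Du i x" i] by simp
      have "\<bar>u x\<bar> powr \<gamma> x * \<bar>Du i x\<bar> powr \<beta> x \<le> \<bar>u x\<bar> powr \<gamma> x * b x powr \<beta> x"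
        using elim bi by (intro mult_left_mono powr_mono2) auto
      also have "\<dots> \<le> 1 + \<bar>u x\<bar> powr p x + b x powr p x"
        using elim assms(6) by (intro powr_prod_bound) (auto simp: b_def)
      finally show ?case by (rule Fle)
    qed
    then show ?thesis using IF by simp
  qed
  have "(\<Sum>i\<in>UNIV. \<integral>\<^sup>+ x. ennreal (\<bar>u x\<bar> powr \<gamma> x * \<bar>Du i x\<bar> powr \<beta> x) \<partial>(lebesgue_on \<Omega>)) < \<infinity>"
    using T2 by (simp add: sum_Pinfty less_top)
  then show "u \<in> S_space \<Omega> \<gamma> \<beta> \<theta>"
    unfolding S_space_def using int wd T1 by auto
qed

end
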